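(* Let $\lambda_\pm:V_0\to(0,\infty)$, $\rho_B=\frac{\lambda_+}{\lambda_++\lambda_-}$, $\rho_*=\min_{V_0}\rho_B$, $\rho^*=\max_{V_0}\rho_B$, and let $\varrho:K\to\mathbb R$ satisfy $\varrho\in\mathcal F$, $\varrho|_{V_0}=\rho_B$, $\min_K\varrho=\rho_*$, $\max_K\varrho=\rho^*$. Then there is a constant $C>0$ depending only on $\rho_B$ and $\|c\|_\infty$ such that for every $N\ge1$ and every $\psi:\Omega_N\to\mathbb R$ with $\psi^2$ a density with respect to $\nu_\varrho$, \[ \big\langle\psi,-5^{-N}\mathcal L_N^G\psi\big\rangle_{\nu_\varrho}\ge -C\Big(\frac35\Big)^N. \]
   Context: Sierpiński gasket: $a_0=(\tfrac12,\tfrac{\sqrt3}2)$, $a_1=(0,0)$, $a_2=(1,0)$, $V_0=\{a_0,a_1,a_2\}$, $\varphi_i(x)=(x+a_i)/2$, $K$ the unique nonempty compact set with $K=\bigcup_i\varphi_i(K)$; for words $w$ over $\{0,1,2\}$, $\varphi_w$ is the composition of the $\varphi_{w_i}$. $V_N=\bigcup_{|w|=N}\varphi_w(V_0)$, $x\sim y$ ($x\ne y$) iff $x,y\in\varphi_w(V_0)$ for some $|w|=N$; $V_N^0=V_N\setminus V_0$; $L(x,y)$ graph distance on $V_N$. $\mathcal E_N(f)=\frac12(\frac53)^N\sum_{x\in V_N}\sum_{y\sim x}(f(y)-f(x))^2$, $\mathcal E=\lim_N\mathcal E_N$, $\mathcal F=\{f:K\to\mathbb R:\mathcal E(f)<\infty\}\subset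 C(K)$. $\Omega_N=\{0,1\}^{V_N}$; $\eta^x$ is $\eta$ with the value at $x$ flipped. $\nu_\varrho$ is the product measure on $\Omega_N$ with $\nu_\varrho(\eta(x)=1)=\varrho(x)$; $\langle\cdot,\cdot\rangle_{\nu_\varrho}$ its $L^2$ inner product; a nonnegative $f$ is a density w.r.t. $\nu_\varrho$ if $E_{\nu_\varrho}[f]=1$. $\mathcal L_N^G\varphi(\eta)=\sum_{x\in V_N^0}c_x(\eta)[\varphi(\eta^x)-\varphi(\eta)]$, where the rates satisfy: for a fixed integer $L_0\ge1$, with $\Lambda_x=\{y\in V_N:L(x,y)\le L_0\}$ and $\mathcal S=\{2^N(\Lambda_x-x):x\in V_N^0\}$ (independent of $N$ for large $N$), there are functions $c(\cdot;\Lambda):\{0,1\}^\Lambda\to(0,\infty)$, $\Lambda\in\mathcal S$, with $c_x(\eta)=c(\eta|_{\Lambda_x};2^N(\Lambda_x-x))$ for all large $N$; $\|c\|_\infty:=\max_{\Lambda\in\mathcal S}\max_{\xi\in\{0,1\}^\Lambda}c(\xi;\Lambda)$. *)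

theory Defs
  imports "HOL-Analysis.Analysis" "HOL-Library.FuncSet"
begin

type_synonym pt = "real \<times> real"

definition a :: "nat \<Rightarrow> pt" where
  "a i = (if i = 0 then (1/2, sqrt 3 / 2) else if i = 1 then (0, 0) else (1, 0))"

definition V0 :: "pt set" where
  "V0 = {a 0, a 1, a 2}"

definition phi :: "nat \<Rightarrow> pt \<Rightarrow> pt" where
  "phi i x = (1/2) *\<^sub>R (x + a i)"

definition phiw :: "nat list \<Rightarrow> pt \<Rightarrow> pt" where
  "phiw w = foldr (\<lambda>i f. phi i \<circ> f) w id"

definition words :: "nat \<Rightarrow> nat list set" where
  "words N = {w. length w = N \<and> set w \<subseteq> {0, 1, 2}}"

definition K :: "pt set" where
  "K = (THE S. compact S \<and> S \<noteq> {} \<and> S = (\<Union>i\<in>{0,1,2::nat}. phi i ` S))"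

definition V :: "nat \<Rightarrow> pt set" where
  "V N = (\<Union>w\<in>words N. phiw w ` V0)"

definition V_int :: "nat \<Rightarrow> pt set" where
  "V_int N = V N - V0"

definition adj :: "nat \<Rightarrow> pt \<Rightarrow> pt \<Rightarrow> bool" where
  "adj N x y \<longleftrightarrow> x \<noteq> y \<and> (\<exists>w\<in>words N. x \<in> phiw w ` V0 \<and> y \<in> phiw w ` V0)"

definition gdist_le :: "nat \<Rightarrow> pt \<Rightarrow> pt \<Rightarrow> nat \<Rightarrow> bool" where
  "gdist_le N x y k \<longleftrightarrow> (\<exists>p. length p \<le> Suc k \<and> p \<noteq> [] \<and> hd p = x \<and> last p = y
      \<and> set p \<subseteq> V N \<and> (\<forall>i. Suc i < length p \<longrightarrow> adj N (p ! i) (p ! Suc i)))"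

definition energyN :: "nat \<Rightarrow> (pt \<Rightarrow> real) \<Rightarrow> real" where
  "energyN N f = (1/2) * (5/3) ^ N *
     (\<Sum>x\<in>V N. \<Sum>y\<in>{y\<in>V N. adj N x y}. (f y - f x)\<^sup>2)"

definition in_F :: "(pt \<Rightarrow> real) \<Rightarrow> bool" where
  "in_F f \<longleftrightarrow> (\<exists>L::real. (\<lambda>N. energyN N f) \<longlonglongrightarrow> L)"

definition Omega :: "nat \<Rightarrow> (pt \<Rightarrow> nat) set" where
  "Omega N = PiE (V N) (\<lambda>_. {0, 1})"

definition flip :: "(pt \<Rightarrow> nat) \<Rightarrow> pt \<Rightarrow> pt \<Rightarrow> nat" where
  "flip \<eta> x = \<eta>(x := 1 - \<eta> x)"

definition nu :: "nat \<Rightarrow> (pt \<Rightarrow> real) \<Rightarrow> (pt \<Rightarrow> nat) \<Rightarrow> real" where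
  "nu N \<rho> \<eta> = (\<Prod>x\<in>V N. if \<eta> x = 1 then \<rho> x else 1 - \<rho> x)"

definition expect :: "nat \<Rightarrow> (pt \<Rightarrow> real) \<Rightarrow> ((pt \<Rightarrow> nat) \<Rightarrow> real) \<Rightarrow> real" where
  "expect N \<rho> f = (\<Sum>\<eta>\<in>Omega N. nu N \<rho> \<eta> * f \<eta>)"

definition inner_nu :: "nat \<Rightarrow> (pt \<Rightarrow> real) \<Rightarrow> ((pt \<Rightarrow> nat) \<Rightarrow> real)
    \<Rightarrow> ((pt \<Rightarrow> nat) \<Rightarrow> real) \<Rightarrow> real" where
  "inner_nu N \<rho> f g = expect N \<rho> (\<lambda>\<eta>. f \<eta> * g \<eta>)"

definition is_density :: "nat \<Rightarrow> (pt \<Rightarrow> real) \<Rightarrow> ((pt \<Rightarrow> nat) \<Rightarrow> real) \<Rightarrow> bool" where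
  "is_density N \<rho> f \<longleftrightarrow> (\<forall>\<eta>\<in>Omega N. f \<eta> \<ge> 0) \<and> expect N \<rho> f = 1"

definition Lam :: "nat \<Rightarrow> nat \<Rightarrow> pt \<Rightarrow> pt set" where
  "Lam L0 N x = {y\<in>V N. gdist_le N x y L0}"

definition shape :: "nat \<Rightarrow> nat \<Rightarrow> pt \<Rightarrow> pt set" where
  "shape L0 N x = (\<lambda>y. (2 ^ N) *\<^sub>R (y - x)) ` Lam L0 N x"

definition local_conf :: "nat \<Rightarrow> nat \<Rightarrow> pt \<Rightarrow> (pt \<Rightarrow> nat) \<Rightarrow> pt \<Rightarrow> nat" where
  "local_conf L0 N x \<eta> = restrict (\<lambda>z. \<eta> (x + (1 / 2 ^ N) *\<^sub>R z)) (shape L0 N x)"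

text \<open>The set of all shapes (union over all N >= 1; it stabilises for large N).\<close>
definition shapes :: "nat \<Rightarrow> pt set set" where
  "shapes L0 = (\<Union>N\<in>{1..}. shape L0 N ` V_int N)"

definition rate :: "nat \<Rightarrow> (pt set \<Rightarrow> (pt \<Rightarrow> nat) \<Rightarrow> real) \<Rightarrow> nat \<Rightarrow> pt \<Rightarrow> (pt \<Rightarrow> nat) \<Rightarrow> real" where
  "rate L0 c N x \<eta> = c (shape L0 N x) (local_conf L0 N x \<eta>)"

definition cnorm :: "nat \<Rightarrow> (pt set \<Rightarrow> (pt \<Rightarrow> nat) \<Rightarrow> real) \<Rightarrow> real" where
  "cnorm L0 c = Max {c \<Lambda> \<xi> | \<Lambda> \<xi>. \<Lambda> \<in> shapes L0 \<and> \<xi> \<in> PiE \<Lambda> (\<lambda>_. {0, 1})}"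

definition gen :: "nat \<Rightarrow> (pt set \<Rightarrow> (pt \<Rightarrow> nat) \<Rightarrow> real) \<Rightarrow> nat
    \<Rightarrow> ((pt \<Rightarrow> nat) \<Rightarrow> real) \<Rightarrow> (pt \<Rightarrow> nat) \<Rightarrow> real" where
  "gen L0 c N \<phi> \<eta> = (\<Sum>x\<in>V_int N. rate L0 c N x \<eta> * (\<phi> (flip \<eta> x) - \<phi> \<eta>))"

end

theory Submission
  imports Defs
begin


lemma phiw_Nil[simp]: "phiw [] = id" by (simp add: phiw_def)
lemma phiw_Cons[simp]: "phiw (i#w) = phi i \<circ> phiw w" by (simp add: phiw_def)

lemma phiw_diff: "phiw w x - phiw w y = (1 / 2 ^ length w) *\<^sub>R (x - y)"
proof (induction w arbitrary: x y)
  case Nil then show ?case by simp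
next
  case (Cons i w)
  have "phi i u - phi i v = (1/2) *\<^sub>R (u - v)" for u v
    by (simp add: phi_def algebra_simps)
  then show ?case using Cons by (simp add: scaleR_scaleR)
qed

lemma dist_phiw: "dist (phiw w x) (phiw w y) = dist x y / 2 ^ length w"
  by (simp add: dist_norm phiw_diff)

lemma finite_words: "finite (words N)"
proof -
  have "words N = {w. set w \<subseteq> {0,1,2} \<and> length w = N}" by (auto simp: words_def)
  then show ?thesis using finite_lists_length_eq[of "{0,1,2::nat}" N] by simp
qed

lemma card_words: "card (words N) = 3 ^ N"
proof -
  have "words N = {w. set w \<subseteq> {0,1,2} \<and> length w = N}" by (auto simp: words_def)
  moreover have "card {0,1,2::nat} = 3" by simp
  ultimately show ?thesis using card_lists_length_eq[of "{0,1,2::nat}" N] by (simp del: insert_iff)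
qed

lemma finite_V0: "finite V0" by (simp add: V0_def)
lemma card_V0: "card V0 \<le> 3"
proof -
  have "V0 = a ` {0,1,2}" by (simp add: V0_def)
  then have "card V0 \<le> card {0,1,2::nat}" by (metis card_image_le finite.emptyI finite.insertI)
  then show ?thesis by simp
qed

lemma finite_V: "finite (V N)" unfolding V_def using finite_words finite_V0 by auto

lemma card_V: "card (V N) \<le> 3 * 3 ^ N"
proof -
  have "card (V N) \<le> (\<Sum>w\<in>words N. card (phiw w ` V0))"
    unfolding V_def using finite_words by (rule card_UN_le)
  also have "\<dots> \<le> (\<Sum>w\<in>words N. 3)"
    by (rule sum_mono) (meson card_V0 card_image_le finite_V0 order_trans)
  also have "\<dots> = 3 * 3 ^ N" using card_words by simp
  finally show ?thesis .
qed

lemma norm_a: "norm (a i) \<le> 1"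
proof -
  have "(sqrt 3 / 2)^2 = (3/4::real)" by (simp add: power_divide)
  then have "(1/2)^2 + (sqrt 3 / 2)^2 = (1::real)" by (simp add: power_divide)
  then have "sqrt ((1/2)^2 + (sqrt 3 / 2)^2) = (1::real)" by simp
  then show ?thesis by (auto simp: a_def norm_Pair)
qed

lemma norm_phiw: "norm x \<le> 1 \<Longrightarrow> norm (phiw w x) \<le> 1"
proof (induction w)
  case Nil then show ?case by simp
next
  case (Cons i w)
  have "norm (phi i (phiw w x)) \<le> (1/2) * (norm (phiw w x) + norm (a i))"
    unfolding phi_def by (simp add: norm_triangle_ineq)
  also have "\<dots> \<le> 1" using Cons norm_a[of i] by simp
  finally show ?case by simp
qed

lemma V_bounded: "V N \<subseteq> cball 0 1"
proof
  fix x assume "x \<in> V N"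
  then obtain w v where "v \<in> V0" "x = phiw w v" by (auto simp: V_def)
  moreover have "norm v \<le> 1" using \<open>v \<in> V0\<close> norm_a by (auto simp: V0_def)
  ultimately show "x \<in> cball 0 1" using norm_phiw by simp
qed

lemma phi_fix: "phi i (a i) = a i" by (simp add: phi_def scaleR_2[symmetric] algebra_simps)


lemma words_Suc: "words (Suc N) = (\<lambda>(i,w). i#w) ` ({0,1,2} \<times> words N)"
proof (rule set_eqI, rule iffI)
  fix v assume "v \<in> words (Suc N)"
  then obtain i w where "v = i#w" "i \<in> {0,1,2}" "w \<in> words N"
    by (cases v) (auto simp: words_def)
  then show "v \<in> (\<lambda>(i,w). i#w) ` ({0,1,2} \<times> words N)" by force
qed (auto simp: words_def)

lemma V_Suc: "V (Suc N) = (\<Union>i\<in>{0,1,2}. phi i ` V N)"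
proof (rule set_eqI, rule iffI)
  fix x assume "x \<in> V (Suc N)"
  then obtain v p where "v \<in> words (Suc N)" "p \<in> V0" "x = phiw v p" unfolding V_def by blast
  then obtain i w where "i \<in> {0,1,2}" "w \<in> words N" "x = phi i (phiw w p)"
    unfolding words_Suc by force
  then show "x \<in> (\<Union>i\<in>{0,1,2}. phi i ` V N)" using \<open>p \<in> V0\<close> unfolding V_def by blast
next
  fix x assume "x \<in> (\<Union>i\<in>{0,1,2}. phi i ` V N)"
  then obtain i w p where "i \<in> {0,1,2}" "w \<in> words N" "p \<in> V0" "x = phi i (phiw w p)"
    unfolding V_def by blast
  moreover then have "i#w \<in> words (Suc N)" "x = phiw (i#w) p" unfolding words_Suc by auto
  ultimately show "x \<in> V (Suc N)" unfolding V_def by blast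
qed

lemma phiw_replicate: "phiw (replicate n i) (a i) = a i"
  by (induction n) (auto simp: phi_fix)

lemma words_replicate: "i \<in> {0,1,2} \<Longrightarrow> replicate n i \<in> words n"
  by (auto simp: words_def)

lemma V0_sub_V1: "V0 \<subseteq> V 1"
proof
  fix x assume "x \<in> V0"
  then obtain i where i: "i \<in> {0,1,2::nat}" "x = a i" by (auto simp: V0_def)
  then have "x = phiw [i] (a i)" by (simp add: phi_fix)
  moreover have "[i] \<in> words 1" using i by (auto simp: words_def)
  moreover have "a i \<in> V0" using i by (auto simp: V0_def)
  ultimately show "x \<in> V 1" unfolding V_def by blast
qed

lemma UV_eq: "(\<Union>N. V N) = (\<Union>N. V (Suc N))"
proof -
  have "V 0 \<subseteq> V (Suc 0)" using V0_sub_V1 by (simp add: V_def words_def)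
  show ?thesis
  proof
    show "(\<Union>N. V N) \<subseteq> (\<Union>N. V (Suc N))"
    proof
      fix x assume "x \<in> (\<Union>N. V N)"
      then obtain N where x: "x \<in> V N" by blast
      show "x \<in> (\<Union>N. V (Suc N))"
      proof (cases N)
        case 0 then show ?thesis using x \<open>V 0 \<subseteq> V (Suc 0)\<close> by blast
      next
        case (Suc m) then show ?thesis using x by blast
      qed
    qed
  qed blast
qed

lemma phiw_words_sub:
  assumes inv: "S = (\<Union>i\<in>{0,1,2}. phi i ` S)" and w: "set w \<subseteq> {0,1,2}" and x: "x \<in> S"
  shows "phiw w x \<in> S"
  using w
proof (induction w)
  case Nil then show ?case using x by simp
next
  case (Cons i w)
  then have "phi i (phiw w x) \<in> (\<Union>i\<in>{0,1,2}. phi i ` S)" by auto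
  then show ?case using inv by (metis comp_apply phiw_Cons)
qed

lemma inv_contains_V:
  assumes cl: "closed S" and ne: "S \<noteq> {}" and inv: "S = (\<Union>i\<in>{0,1,2}. phi i ` S)"
  shows "V N \<subseteq> S"
proof -
  obtain s where s: "s \<in> S" using ne by auto
  have aS: "a i \<in> S" if i: "i \<in> {0,1,2}" for i
  proof -
    have "a i \<in> closure S"
      unfolding closure_approachable
    proof (intro allI impI)
      fix e :: real assume e: "e > 0"
      obtain n where n: "dist s (a i) / e < 2 ^ n"
        using real_arch_pow[of 2 "dist s (a i) / e"] by auto
      have "phiw (replicate n i) s \<in> S"
        by (rule phiw_words_sub[OF inv _ s]) (use i in auto)
      moreover have "dist (phiw (replicate n i) s) (a i) < e"
      proof -
        have "dist (phiw (replicate n i) s) (a i) = dist s (a i) / 2 ^ n"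
          using dist_phiw[of "replicate n i" s "a i"] by (simp add: phiw_replicate)
        also have "\<dots> < e" using n e by (simp add: divide_less_eq mult.commute)
        finally show ?thesis .
      qed
      ultimately show "\<exists>y\<in>S. dist y (a i) < e" by blast
    qed
    then show ?thesis using cl by simp
  qed
  show ?thesis
  proof
    fix x assume "x \<in> V N"
    then obtain w v where w: "w \<in> words N" and v: "v \<in> V0" and x: "x = phiw w v"
      by (auto simp: V_def)
    have "v \<in> S" using v aS by (auto simp: V0_def)
    then show "x \<in> S" using phiw_words_sub[OF inv _ \<open>v \<in> S\<close>] w x by (auto simp: words_def)
  qed
qed

lemma inv_decomp:
  assumes inv: "S = (\<Union>i\<in>{0,1,2}. phi i ` S)" and s: "s \<in> S"
  shows "\<exists>w\<in>words N. \<exists>t\<in>S. s = phiw w t"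
  using s
proof (induction N arbitrary: s)
  case 0 then show ?case by (auto simp: words_def intro!: bexI[of _ "[]"])
next
  case (Suc N)
  then obtain i s1 where i: "i \<in> {0,1,2}" and s1: "s1 \<in> S" and "s = phi i s1"
    using inv by blast
  moreover obtain w t where "w \<in> words N" "t \<in> S" "s1 = phiw w t" using Suc.IH s1 by blast
  ultimately have "i#w \<in> words (Suc N)" "s = phiw (i#w) t" by (auto simp: words_def)
  then show ?case using \<open>t \<in> S\<close> by blast
qed

lemma inv_sub_closure:
  assumes bd: "bounded S" and inv: "S = (\<Union>i\<in>{0,1,2}. phi i ` S)"
  shows "S \<subseteq> closure (\<Union>N. V N)"
proof
  fix s assume s: "s \<in> S"
  obtain B where B: "\<forall>t\<in>S. dist (a 1) t \<le> B" using bd bounded_any_center by blast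
  show "s \<in> closure (\<Union>N. V N)"
    unfolding closure_approachable
  proof (intro allI impI)
    fix e :: real assume e: "e > 0"
    obtain N where n: "B / e < 2 ^ N"
      using real_arch_pow[of 2 "B / e"] by auto
    obtain w t where w: "w \<in> words N" and t: "t \<in> S" and st: "s = phiw w t"
      using inv_decomp[OF inv s] by blast
    have "phiw w (a 1) \<in> V N" using w by (auto simp: V_def V0_def)
    moreover have "dist (phiw w (a 1)) s < e"
    proof -
      have "dist (phiw w (a 1)) s = dist (a 1) t / 2 ^ N"
        using dist_phiw[of w "a 1" t] w st by (simp add: words_def)
      also have "\<dots> \<le> B / 2 ^ N" using B t by (simp add: divide_right_mono)
      also have "\<dots> < e" using n e by (simp add: divide_less_eq mult.commute)
      finally show ?thesis .
    qed
    ultimately show "\<exists>y\<in>\<Union>N. V N. dist y s < e" by blast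
  qed
qed

lemma phi_cont: "continuous_on X (phi i)"
  unfolding phi_def by (intro continuous_intros)

lemma A_props:
  defines "A \<equiv> closure (\<Union>N. V N)"
  shows "compact A \<and> A \<noteq> {} \<and> A = (\<Union>i\<in>{0,1,2}. phi i ` A)"
proof -
  have bdU: "bounded (\<Union>N. V N)" using V_bounded by (meson UN_least bounded_cball bounded_subset)
  have cA: "compact A" unfolding A_def using bdU by (simp add: compact_closure)
  have "a 1 \<in> V 0" by (auto simp: V_def V0_def words_def intro!: bexI[of _ "[]"])
  then have neA: "A \<noteq> {}" unfolding A_def using closure_subset by blast
  have img: "phi i ` A = closure (phi i ` (\<Union>N. V N))" for i
  proof
    show "phi i ` A \<subseteq> closure (phi i ` (\<Union>N. V N))"
      unfolding A_def by (rule image_closure_subset[OF phi_cont closed_closure closure_subset])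
    have "compact (phi i ` A)" by (rule compact_continuous_image[OF phi_cont cA])
    then have "closed (phi i ` A)" by (rule compact_imp_closed)
    moreover have "phi i ` (\<Union>N. V N) \<subseteq> phi i ` A" unfolding A_def using closure_subset by blast
    ultimately show "closure (phi i ` (\<Union>N. V N)) \<subseteq> phi i ` A" by (rule closure_minimal[rotated])
  qed
  have "(\<Union>i\<in>{0,1,2}. phi i ` A) = closure (phi 0 ` (\<Union>N. V N)) \<union> closure (phi 1 ` (\<Union>N. V N)) \<union> closure (phi 2 ` (\<Union>N. V N))"
    using img by auto
  also have "\<dots> = closure (\<Union>i\<in>{0,1,2}. phi i ` (\<Union>N. V N))" by (auto simp: closure_Un)
  also have "(\<Union>i\<in>{0,1,2}. phi i ` (\<Union>N. V N)) = (\<Union>N. V (Suc N))"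
    by (auto simp: V_Suc)
  also have "\<dots> = (\<Union>N. V N)" using UV_eq by simp
  finally show ?thesis using cA neA A_def by simp
qed

lemma K_char: "compact K \<and> K \<noteq> {} \<and> K = (\<Union>i\<in>{0,1,2}. phi i ` K)"
proof -
  let ?P = "\<lambda>S. compact S \<and> S \<noteq> {} \<and> S = (\<Union>i\<in>{0,1,2::nat}. phi i ` S)"
  let ?A = "closure (\<Union>N. V N)"
  have ex: "?P ?A" by (rule A_props)
  have un: "S = ?A" if PS: "?P S" for S
  proof
    have bS: "bounded S" using PS by (simp add: compact_imp_bounded)
    have iS: "S = (\<Union>i\<in>{0,1,2::nat}. phi i ` S)" using PS by simp
    show "S \<subseteq> ?A" by (rule inv_sub_closure[OF bS iS])
    have cS: "closed S" using PS by (simp add: compact_imp_closed)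
    have nS: "S \<noteq> {}" using PS by simp
    have "V N \<subseteq> S" for N by (rule inv_contains_V[OF cS nS iS])
    then have "(\<Union>N. V N) \<subseteq> S" by (simp add: UN_least)
    then show "?A \<subseteq> S" using cS by (rule closure_minimal)
  qed
  have "?P (THE S. ?P S)"
  proof (rule theI[of ?P])
    show "?P ?A" by (rule ex)
    show "\<And>S. ?P S \<Longrightarrow> S = ?A" by (rule un)
  qed
  then show ?thesis unfolding K_def .
qed

lemma V_sub_K: "V N \<subseteq> K"
proof -
  have P: "compact K" "K \<noteq> {}" "K = (\<Union>i\<in>{0,1,2}. phi i ` K)" using K_char by auto
  show ?thesis by (rule inv_contains_V[OF compact_imp_closed[OF P(1)] P(2) P(3)])
qed


definition Dset :: "pt set" where "Dset = (\<lambda>(u,v). u - v) ` (V0 \<times> V0)"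
definition G :: "nat \<Rightarrow> pt set" where
  "G k = sum_list ` {xs. set xs \<subseteq> Dset \<and> length xs \<le> k}"

lemma finite_G: "finite (G k)"
  unfolding G_def Dset_def by (intro finite_imageI finite_lists_length_le) (simp add: finite_V0)

lemma G_mono: "k \<le> k' \<Longrightarrow> G k \<subseteq> G k'"
  unfolding G_def by auto

lemma adj_diff: assumes "adj N x y" shows "(2 ^ N) *\<^sub>R (y - x) \<in> Dset"
proof -
  obtain w p q where w: "w \<in> words N" and p: "p \<in> V0" and q: "q \<in> V0"
    and x: "x = phiw w p" and y: "y = phiw w q"
    using assms unfolding adj_def by blast
  have "y - x = (1 / 2 ^ N) *\<^sub>R (q - p)" using w x y phiw_diff[of w q p] by (simp add: words_def)
  then have "(2 ^ N) *\<^sub>R (y - x) = q - p" by simp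
  then show ?thesis using p q unfolding Dset_def by force
qed

lemma path_G:
  "p \<noteq> [] \<Longrightarrow> (\<forall>i. Suc i < length p \<longrightarrow> adj N (p ! i) (p ! Suc i))
    \<Longrightarrow> (2 ^ N) *\<^sub>R (last p - hd p) \<in> G (length p - 1)"
proof (induction p)
  case Nil then show ?case by simp
next
  case (Cons x q)
  show ?case
  proof (cases q)
    case Nil
    have "sum_list [] \<in> G 0" unfolding G_def by (rule image_eqI[of _ _ "[]"]) auto
    then show ?thesis using Nil by simp
  next
    case (Cons y r)
    have ch: "\<forall>i. Suc i < length q \<longrightarrow> adj N (q ! i) (q ! Suc i)"
      using Cons.prems(2) by (metis Suc_less_eq length_Cons nth_Cons_Suc)
    have "adj N x y" using Cons.prems(2) Cons by (metis length_Cons nth_Cons_0 nth_Cons_Suc zero_less_Suc Suc_less_eq)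
    then have d: "(2 ^ N) *\<^sub>R (y - x) \<in> Dset" by (rule adj_diff)
    from Cons.IH[OF _ ch] Cons obtain xs where xs: "set xs \<subseteq> Dset" "length xs \<le> length q - 1"
      "(2 ^ N) *\<^sub>R (last q - hd q) = sum_list xs" unfolding G_def by auto
    have "(2 ^ N) *\<^sub>R (last (x#q) - hd (x#q)) = sum_list ((2 ^ N) *\<^sub>R (y - x) # xs)"
      using xs(3) Cons by (simp add: algebra_simps)
    moreover have "set ((2 ^ N) *\<^sub>R (y - x) # xs) \<subseteq> Dset" "length ((2 ^ N) *\<^sub>R (y - x) # xs) \<le> length (x#q) - 1"
      using xs d Cons by auto
    ultimately show ?thesis unfolding G_def by blast
  qed
qed

lemma shape_sub_G: "shape L0 N x \<subseteq> G L0"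
proof
  fix z assume "z \<in> shape L0 N x"
  then obtain y where y: "y \<in> Lam L0 N x" and z: "z = (2 ^ N) *\<^sub>R (y - x)"
    unfolding shape_def by blast
  then obtain p where p: "length p \<le> Suc L0" "p \<noteq> []" "hd p = x" "last p = y"
    "\<forall>i. Suc i < length p \<longrightarrow> adj N (p ! i) (p ! Suc i)"
    unfolding Lam_def gdist_le_def by blast
  have "z \<in> G (length p - 1)" using path_G[OF p(2) p(5)] p z by simp
  moreover have "G (length p - 1) \<subseteq> G L0" using p(1) by (intro G_mono) simp
  ultimately show "z \<in> G L0" by blast
qed

lemma finite_cset: "finite {c \<Lambda> \<xi> | \<Lambda> \<xi>. \<Lambda> \<in> shapes L0 \<and> \<xi> \<in> PiE \<Lambda> (\<lambda>_. {0, 1::nat})}"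
proof -
  have sh: "shapes L0 \<subseteq> Pow (G L0)" unfolding shapes_def using shape_sub_G by blast
  have fin_sh: "finite (shapes L0)" using sh finite_G by (meson finite_Pow_iff finite_subset)
  have fin_S: "finite (SIGMA \<Lambda>:shapes L0. PiE \<Lambda> (\<lambda>_. {0, 1::nat}))"
  proof (rule finite_SigmaI[OF fin_sh])
    fix \<Lambda> assume "\<Lambda> \<in> shapes L0"
    then have "finite \<Lambda>" using sh finite_G by (meson PowD finite_subset subsetD)
    then show "finite (PiE \<Lambda> (\<lambda>_. {0, 1::nat}))" by (intro finite_PiE) auto
  qed
  have "{c \<Lambda> \<xi> | \<Lambda> \<xi>. \<Lambda> \<in> shapes L0 \<and> \<xi> \<in> PiE \<Lambda> (\<lambda>_. {0, 1::nat})}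
      = (\<lambda>(\<Lambda>, \<xi>). c \<Lambda> \<xi>) ` (SIGMA \<Lambda>:shapes L0. PiE \<Lambda> (\<lambda>_. {0, 1::nat}))" by auto
  then show ?thesis using fin_S by simp
qed

lemma rate_bounds:
  assumes N: "N \<ge> 1" and x: "x \<in> V_int N" and eta: "\<eta> \<in> Omega N"
    and pos: "\<forall>\<Lambda>\<in>shapes L0. \<forall>\<xi>\<in>PiE \<Lambda> (\<lambda>_. {0, 1}). c \<Lambda> \<xi> > 0"
  shows "0 < rate L0 c N x \<eta> \<and> rate L0 c N x \<eta> \<le> cnorm L0 c"
proof -
  have sh: "shape L0 N x \<in> shapes L0" unfolding shapes_def using N x by auto
  have lc: "local_conf L0 N x \<eta> \<in> PiE (shape L0 N x) (\<lambda>_. {0, 1})"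
    unfolding local_conf_def restrict_PiE_iff
  proof
    fix z assume "z \<in> shape L0 N x"
    then obtain y where y: "y \<in> Lam L0 N x" and z: "z = (2 ^ N) *\<^sub>R (y - x)"
      unfolding shape_def by blast
    have "x + (1 / 2 ^ N) *\<^sub>R z = y" using z by simp
    moreover have "y \<in> V N" using y by (simp add: Lam_def)
    ultimately show "\<eta> (x + (1 / 2 ^ N) *\<^sub>R z) \<in> {0, 1}" using eta
      unfolding Omega_def by (auto simp: PiE_iff)
  qed
  have "rate L0 c N x \<eta> \<in> {c \<Lambda> \<xi> | \<Lambda> \<xi>. \<Lambda> \<in> shapes L0 \<and> \<xi> \<in> PiE \<Lambda> (\<lambda>_. {0, 1::nat})}"
    unfolding rate_def using sh lc by blast
  then have "rate L0 c N x \<eta> \<le> cnorm L0 c" unfolding cnorm_def using finite_cset by (rule Max_ge[rotated])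
  moreover have "0 < rate L0 c N x \<eta>" unfolding rate_def using pos sh lc by blast
  ultimately show ?thesis by simp
qed


lemma term_bound:
  fixes n p q r M :: real
  assumes "0 < r" "r \<le> M" "0 \<le> n"
  shows "n * (p * - (r * (q - p))) \<ge> - (\<bar>M\<bar> / 2) * (n * q\<^sup>2)"
proof -
  have "r * ((p - q/2)\<^sup>2 + q\<^sup>2/4) \<ge> 0" using assms by simp
  then have "p * - (r * (q - p)) \<ge> - (r/2) * q\<^sup>2" by (simp add: power2_eq_square algebra_simps)
  moreover have "- (r/2) * q\<^sup>2 \<ge> - (\<bar>M\<bar>/2) * q\<^sup>2" using assms by (simp add: mult_right_mono)
  ultimately have "p * - (r * (q - p)) \<ge> - (\<bar>M\<bar>/2) * q\<^sup>2" by linarith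
  then have "n * (p * - (r * (q - p))) \<ge> n * (- (\<bar>M\<bar>/2) * q\<^sup>2)" using assms(3) by (rule mult_left_mono)
  then show ?thesis by (simp add: algebra_simps)
qed

lemma flip_Omega: "x \<in> V N \<Longrightarrow> \<eta> \<in> Omega N \<Longrightarrow> flip \<eta> x \<in> Omega N"
  unfolding Omega_def flip_def by (auto simp: PiE_iff extensional_def)

lemma flip_flip: "x \<in> V N \<Longrightarrow> \<eta> \<in> Omega N \<Longrightarrow> flip (flip \<eta> x) x = \<eta>"
  unfolding Omega_def flip_def by (auto simp: PiE_iff fun_eq_iff)

lemma nu_nonneg: "\<forall>y\<in>V N. 0 \<le> rho y \<and> rho y \<le> 1 \<Longrightarrow> nu N rho \<eta> \<ge> 0"
  unfolding nu_def by (intro prod_nonneg) auto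

lemma nu_flip:
  assumes rb: "\<forall>y\<in>V N. lo \<le> rho y \<and> rho y \<le> hi" and lo: "0 < lo" and hi: "hi < 1"
    and x: "x \<in> V N" and eta: "\<eta> \<in> Omega N"
  shows "nu N rho \<eta> \<le> (1/lo + 1/(1 - hi)) * nu N rho (flip \<eta> x)"
proof -
  let ?f = "\<lambda>\<eta> y. if \<eta> y = 1 then rho y else 1 - rho y"
  let ?R = "1/lo + 1/(1 - hi)"
  let ?P = "\<Prod>y\<in>V N - {x}. ?f \<eta> y"
  have P: "(\<Prod>y\<in>V N - {x}. ?f (flip \<eta> x) y) = ?P"
    by (rule prod.cong) (auto simp: flip_def)
  have n1: "nu N rho \<eta> = ?f \<eta> x * ?P" unfolding nu_def using x finite_V by (simp add: prod.remove)
  have n2: "nu N rho (flip \<eta> x) = ?f (flip \<eta> x) x * ?P"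
    unfolding nu_def using x finite_V P by (simp add: prod.remove)
  have P0: "?P \<ge> 0" using rb lo hi by (intro prod_nonneg) auto
  have rx: "lo \<le> rho x" "rho x \<le> hi" using rb x by auto
  have ex: "\<eta> x = 0 \<or> \<eta> x = 1" using eta x unfolding Omega_def by (auto simp: PiE_iff)
  have fx: "?f \<eta> x \<le> ?R * ?f (flip \<eta> x) x"
  proof (cases "\<eta> x = 1")
    case True
    then have "?f (flip \<eta> x) x = 1 - rho x" by (simp add: flip_def)
    moreover have "rho x \<le> ?R * (1 - rho x)"
    proof -
      have "1/(1-hi) * (1 - rho x) \<ge> 1" using rx hi by (simp add: field_simps)
      moreover have "1/lo * (1 - rho x) \<ge> 0" using rx hi lo by simp
      moreover have "?R * (1 - rho x) = 1/lo * (1 - rho x) + 1/(1-hi) * (1 - rho x)"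
        by (simp add: distrib_right)
      ultimately show ?thesis using rx lo hi by linarith
    qed
    ultimately show ?thesis using True by simp
  next
    case False
    then have "\<eta> x = 0" using ex by auto
    then have "?f (flip \<eta> x) x = rho x" by (simp add: flip_def)
    moreover have "1 - rho x \<le> ?R * rho x"
    proof -
      have "1/lo * rho x \<ge> 1" using rx lo by (simp add: field_simps)
      moreover have "1/(1-hi) * rho x \<ge> 0" using rx hi lo by simp
      moreover have "?R * rho x = 1/lo * rho x + 1/(1-hi) * rho x"
        by (simp add: distrib_right)
      ultimately show ?thesis using rx lo hi by linarith
    qed
    ultimately show ?thesis using False by simp
  qed
  have "nu N rho \<eta> \<le> ?R * ?f (flip \<eta> x) x * ?P" unfolding n1 using fx P0 by (rule mult_right_mono)
  then show ?thesis using n2 by (simp add: mult.assoc)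
qed


lemma main_bound:
  assumes rb: "\<forall>y\<in>V N. lo \<le> rho y \<and> rho y \<le> hi" and lo: "0 < lo" and hi: "hi < 1"
    and rt: "\<forall>\<eta>\<in>Omega N. \<forall>x\<in>V_int N. 0 < rate L0 c N x \<eta> \<and> rate L0 c N x \<eta> \<le> M"
    and dens: "is_density N rho (\<lambda>\<eta>. (\<psi> \<eta>)\<^sup>2)"
  shows "inner_nu N rho \<psi> (\<lambda>\<eta>. - ((1/5) ^ N * gen L0 c N \<psi> \<eta>))
          \<ge> - ((3/5) ^ N * (3/2 * \<bar>M\<bar> * (1/lo + 1/(1 - hi))))"
proof -
  let ?R = "1/lo + 1/(1 - hi)"
  let ?\<Omega> = "Omega N"
  let ?n = "nu N rho"
  let ?T = "\<lambda>x \<eta>. ?n \<eta> * (\<psi> \<eta> * - (rate L0 c N x \<eta> * (\<psi> (flip \<eta> x) - \<psi> \<eta>)))"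
  have R0: "?R \<ge> 0" using lo hi by simp
  have nn: "?n \<eta> \<ge> 0" for \<eta> using rb lo hi by (intro nu_nonneg) force
  have one: "(\<Sum>\<eta>\<in>?\<Omega>. ?n \<eta> * (\<psi> \<eta>)\<^sup>2) = 1" using dens by (simp add: is_density_def expect_def)
  have eq: "inner_nu N rho \<psi> (\<lambda>\<eta>. - ((1/5) ^ N * gen L0 c N \<psi> \<eta>))
      = (1/5) ^ N * (\<Sum>x\<in>V_int N. \<Sum>\<eta>\<in>?\<Omega>. ?T x \<eta>)"
  proof -
    have "inner_nu N rho \<psi> (\<lambda>\<eta>. - ((1/5) ^ N * gen L0 c N \<psi> \<eta>))
        = (\<Sum>\<eta>\<in>?\<Omega>. (1/5) ^ N * (\<Sum>x\<in>V_int N. ?T x \<eta>))"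
      unfolding inner_nu_def expect_def gen_def
      by (rule sum.cong) (simp_all add: sum_distrib_left sum_negf sum_subtractf algebra_simps)
    also have "\<dots> = (1/5) ^ N * (\<Sum>\<eta>\<in>?\<Omega>. \<Sum>x\<in>V_int N. ?T x \<eta>)"
      by (simp add: sum_distrib_left)
    also have "(\<Sum>\<eta>\<in>?\<Omega>. \<Sum>x\<in>V_int N. ?T x \<eta>) = (\<Sum>x\<in>V_int N. \<Sum>\<eta>\<in>?\<Omega>. ?T x \<eta>)"
      by (rule sum.swap)
    finally show ?thesis .
  qed
  have inner_x: "(\<Sum>\<eta>\<in>?\<Omega>. ?T x \<eta>) \<ge> - (\<bar>M\<bar> / 2) * ?R" if x: "x \<in> V_int N" for x
  proof -
    have xV: "x \<in> V N" using x by (simp add: V_int_def)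
    have "(\<Sum>\<eta>\<in>?\<Omega>. ?T x \<eta>) \<ge> (\<Sum>\<eta>\<in>?\<Omega>. - (\<bar>M\<bar> / 2) * (?n \<eta> * (\<psi> (flip \<eta> x))\<^sup>2))"
    proof (rule sum_mono)
      fix \<eta> assume e: "\<eta> \<in> ?\<Omega>"
      have r1: "0 < rate L0 c N x \<eta>" and r2: "rate L0 c N x \<eta> \<le> M" using rt e x by blast+
      show "- (\<bar>M\<bar> / 2) * (?n \<eta> * (\<psi> (flip \<eta> x))\<^sup>2) \<le> ?T x \<eta>"
        by (rule term_bound[OF r1 r2 nn])
    qed
    moreover have B: "(\<Sum>\<eta>\<in>?\<Omega>. ?n \<eta> * (\<psi> (flip \<eta> x))\<^sup>2) \<le> ?R"
    proof -
      have "(\<Sum>\<eta>\<in>?\<Omega>. ?n \<eta> * (\<psi> (flip \<eta> x))\<^sup>2)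
          \<le> (\<Sum>\<eta>\<in>?\<Omega>. ?R * (?n (flip \<eta> x) * (\<psi> (flip \<eta> x))\<^sup>2))"
      proof (rule sum_mono)
        fix \<eta> assume "\<eta> \<in> ?\<Omega>"
        then have "?n \<eta> \<le> ?R * ?n (flip \<eta> x)" using nu_flip[OF rb lo hi xV] by blast
        then show "?n \<eta> * (\<psi> (flip \<eta> x))\<^sup>2 \<le> ?R * (?n (flip \<eta> x) * (\<psi> (flip \<eta> x))\<^sup>2)"
          by (metis mult.assoc mult_right_mono zero_le_power2)
      qed
      also have "\<dots> = ?R * (\<Sum>\<eta>\<in>?\<Omega>. ?n (flip \<eta> x) * (\<psi> (flip \<eta> x))\<^sup>2)"
        by (simp add: sum_distrib_left)
      also have "(\<Sum>\<eta>\<in>?\<Omega>. ?n (flip \<eta> x) * (\<psi> (flip \<eta> x))\<^sup>2) = (\<Sum>\<eta>\<in>?\<Omega>. ?n \<eta> * (\<psi> \<eta>)\<^sup>2)"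
      proof (rule sum.reindex_bij_betw)
        show "bij_betw (\<lambda>\<eta>. flip \<eta> x) ?\<Omega> ?\<Omega>"
          by (rule bij_betwI[where g="\<lambda>\<eta>. flip \<eta> x"]) (auto simp: flip_Omega[OF xV] flip_flip[OF xV])
      qed
      finally show ?thesis using one by simp
    qed
    moreover have "(\<Sum>\<eta>\<in>?\<Omega>. - (\<bar>M\<bar> / 2) * (?n \<eta> * (\<psi> (flip \<eta> x))\<^sup>2))
        = - ((\<bar>M\<bar> / 2) * (\<Sum>\<eta>\<in>?\<Omega>. ?n \<eta> * (\<psi> (flip \<eta> x))\<^sup>2))"
      by (simp add: sum_distrib_left sum_negf)
    moreover have "(\<bar>M\<bar> / 2) * (\<Sum>\<eta>\<in>?\<Omega>. ?n \<eta> * (\<psi> (flip \<eta> x))\<^sup>2) \<le> (\<bar>M\<bar> / 2) * ?R"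
      by (rule mult_left_mono[OF B]) simp
    ultimately show ?thesis by linarith
  qed
  have "(\<Sum>x\<in>V_int N. \<Sum>\<eta>\<in>?\<Omega>. ?T x \<eta>) \<ge> (\<Sum>x\<in>V_int N. - (\<bar>M\<bar> / 2) * ?R)"
    by (rule sum_mono) (rule inner_x)
  moreover have "(\<Sum>x\<in>V_int N. - (\<bar>M\<bar> / 2) * ?R) = - (real (card (V_int N)) * ((\<bar>M\<bar> / 2) * ?R))" by simp
  moreover have C: "real (card (V_int N)) \<le> 3 * 3 ^ N"
  proof -
    have "card (V_int N) \<le> card (V N)" unfolding V_int_def using finite_V by (intro card_mono) auto
    then have "card (V_int N) \<le> 3 * 3 ^ N" using card_V[of N] by linarith
    then have "real (card (V_int N)) \<le> real (3 * 3 ^ N)" by (simp only: of_nat_le_iff)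
    then show ?thesis by simp
  qed
  moreover have "real (card (V_int N)) * ((\<bar>M\<bar> / 2) * ?R) \<le> (3 * 3 ^ N) * ((\<bar>M\<bar> / 2) * ?R)"
    by (rule mult_right_mono[OF C]) (simp add: R0)
  ultimately have S0: "(\<Sum>x\<in>V_int N. \<Sum>\<eta>\<in>?\<Omega>. ?T x \<eta>) \<ge> - ((3 * 3 ^ N) * ((\<bar>M\<bar> / 2) * ?R))"
    by linarith
  then have S: "(\<Sum>x\<in>V_int N. \<Sum>\<eta>\<in>?\<Omega>. ?T x \<eta>) \<ge> - (3 * 3 ^ N) * (\<bar>M\<bar> / 2) * ?R"
    by (simp add: mult.assoc)
  have "(1/5::real) ^ N * (\<Sum>x\<in>V_int N. \<Sum>\<eta>\<in>?\<Omega>. ?T x \<eta>) \<ge> (1/5) ^ N * (- (3 * 3 ^ N) * (\<bar>M\<bar> / 2) * ?R)"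
    using S by (rule mult_left_mono) simp
  also have "(1/5::real) ^ N * (- (3 * 3 ^ N) * (\<bar>M\<bar> / 2) * ?R) = - ((3/5) ^ N * (3/2 * \<bar>M\<bar> * ?R))"
    by (simp add: power_divide field_simps)
  finally show ?thesis using eq by simp
qed


theorem proposition3p1:
  "\<exists>Cf :: (pt \<Rightarrow> real) \<Rightarrow> real \<Rightarrow> real.
    \<forall>(lp :: pt \<Rightarrow> real) (lm :: pt \<Rightarrow> real) (\<rho>B :: pt \<Rightarrow> real) (\<rho>lo :: real) (\<rho>hi :: real)
      (rho :: pt \<Rightarrow> real) (L0 :: nat) (c :: pt set \<Rightarrow> (pt \<Rightarrow> nat) \<Rightarrow> real).
      (\<forall>x\<in>V0. lp x > 0 \<and> lm x > 0)
      \<and> (\<forall>x\<in>V0. \<rho>B x = lp x / (lp x + lm x))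
      \<and> \<rho>lo = Min (\<rho>B ` V0) \<and> \<rho>hi = Max (\<rho>B ` V0)
      \<and> in_F rho \<and> (\<forall>x\<in>V0. rho x = \<rho>B x)
      \<and> (\<forall>x\<in>K. \<rho>lo \<le> rho x \<and> rho x \<le> \<rho>hi)
      \<and> (\<exists>x\<in>K. rho x = \<rho>lo) \<and> (\<exists>x\<in>K. rho x = \<rho>hi)
      \<and> L0 \<ge> 1
      \<and> (\<forall>\<Lambda>\<in>shapes L0. \<forall>\<xi>\<in>PiE \<Lambda> (\<lambda>_. {0, 1}). c \<Lambda> \<xi> > 0)
      \<longrightarrow> Cf (restrict \<rho>B V0) (cnorm L0 c) > 0
        \<and> (\<forall>N \<ge> 1. \<forall>\<psi> :: (pt \<Rightarrow> nat) \<Rightarrow> real.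
             is_density N rho (\<lambda>\<eta>. (\<psi> \<eta>)\<^sup>2) \<longrightarrow>
             inner_nu N rho \<psi> (\<lambda>\<eta>. - ((1/5) ^ N * gen L0 c N \<psi> \<eta>))
               \<ge> - Cf (restrict \<rho>B V0) (cnorm L0 c) * (3/5) ^ N)"
  proof (intro exI[of _ "\<lambda>r m. 3/2 * \<bar>m\<bar> * (1 / Min (r ` V0) + 1 / (1 - Max (r ` V0))) + 1"] allI impI)
  fix lp lm :: "pt \<Rightarrow> real" and \<rho>B :: "pt \<Rightarrow> real" and \<rho>lo \<rho>hi :: real
    and rho :: "pt \<Rightarrow> real" and L0 :: nat and c :: "pt set \<Rightarrow> (pt \<Rightarrow> nat) \<Rightarrow> real"
  assume H: "(\<forall>x\<in>V0. lp x > 0 \<and> lm x > 0)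
      \<and> (\<forall>x\<in>V0. \<rho>B x = lp x / (lp x + lm x))
      \<and> \<rho>lo = Min (\<rho>B ` V0) \<and> \<rho>hi = Max (\<rho>B ` V0)
      \<and> in_F rho \<and> (\<forall>x\<in>V0. rho x = \<rho>B x)
      \<and> (\<forall>x\<in>K. \<rho>lo \<le> rho x \<and> rho x \<le> \<rho>hi)
      \<and> (\<exists>x\<in>K. rho x = \<rho>lo) \<and> (\<exists>x\<in>K. rho x = \<rho>hi)
      \<and> L0 \<ge> 1
      \<and> (\<forall>\<Lambda>\<in>shapes L0. \<forall>\<xi>\<in>PiE \<Lambda> (\<lambda>_. {0, 1}). c \<Lambda> \<xi> > 0)"
  have img: "restrict \<rho>B V0 ` V0 = \<rho>B ` V0" by simp
  have ne: "V0 \<noteq> {}" by (simp add: V0_def)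
  have b01: "0 < \<rho>B x \<and> \<rho>B x < 1" if "x \<in> V0" for x
    using H that by (auto simp: divide_less_eq)
  obtain xl where "xl \<in> V0" "\<rho>lo = \<rho>B xl" using H Min_in[OF finite_imageI[OF finite_V0] ] ne by (metis empty_is_image imageE)
  then have lo: "0 < \<rho>lo" using b01 by simp
  obtain xh where "xh \<in> V0" "\<rho>hi = \<rho>B xh" using H Max_in[OF finite_imageI[OF finite_V0] ] ne by (metis empty_is_image imageE)
  then have hi: "\<rho>hi < 1" using b01 by simp
  let ?R = "1 / \<rho>lo + 1 / (1 - \<rho>hi)"
  have Cf: "3/2 * \<bar>cnorm L0 c\<bar> * (1 / Min (restrict \<rho>B V0 ` V0) + 1 / (1 - Max (restrict \<rho>B V0 ` V0))) + 1
      = 3/2 * \<bar>cnorm L0 c\<bar> * ?R + 1" using H img by simp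
  have R0: "?R \<ge> 0" using lo hi by simp
  show "3/2 * \<bar>cnorm L0 c\<bar> * (1 / Min (restrict \<rho>B V0 ` V0) + 1 / (1 - Max (restrict \<rho>B V0 ` V0))) + 1 > 0
        \<and> (\<forall>N \<ge> 1. \<forall>\<psi> :: (pt \<Rightarrow> nat) \<Rightarrow> real.
             is_density N rho (\<lambda>\<eta>. (\<psi> \<eta>)\<^sup>2) \<longrightarrow>
             inner_nu N rho \<psi> (\<lambda>\<eta>. - ((1/5) ^ N * gen L0 c N \<psi> \<eta>))
               \<ge> - (3/2 * \<bar>cnorm L0 c\<bar> * (1 / Min (restrict \<rho>B V0 ` V0) + 1 / (1 - Max (restrict \<rho>B V0 ` V0))) + 1) * (3/5) ^ N)"
    unfolding Cf
  proof (intro conjI allI impI)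
    show "0 < 3/2 * \<bar>cnorm L0 c\<bar> * ?R + 1" proof -
      have "3/2 * \<bar>cnorm L0 c\<bar> * ?R \<ge> 0" using R0 by simp
      then show ?thesis by linarith
    qed
    fix N :: nat and \<psi> :: "(pt \<Rightarrow> nat) \<Rightarrow> real"
    assume N: "N \<ge> 1" and d: "is_density N rho (\<lambda>\<eta>. (\<psi> \<eta>)\<^sup>2)"
    have rb: "\<forall>y\<in>V N. \<rho>lo \<le> rho y \<and> rho y \<le> \<rho>hi" using H V_sub_K by blast
    have rt: "\<forall>\<eta>\<in>Omega N. \<forall>x\<in>V_int N. 0 < rate L0 c N x \<eta> \<and> rate L0 c N x \<eta> \<le> cnorm L0 c"
      using rate_bounds[OF N] H by blast
    have "inner_nu N rho \<psi> (\<lambda>\<eta>. - ((1/5) ^ N * gen L0 c N \<psi> \<eta>))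
          \<ge> - ((3/5) ^ N * (3/2 * \<bar>cnorm L0 c\<bar> * ?R))"
      by (rule main_bound[OF rb lo hi rt d])
    moreover have "- ((3/5::real) ^ N * (3/2 * \<bar>cnorm L0 c\<bar> * ?R)) \<ge> - (3/2 * \<bar>cnorm L0 c\<bar> * ?R + 1) * (3/5) ^ N"
      by (simp add: algebra_simps)
    ultimately show "inner_nu N rho \<psi> (\<lambda>\<eta>. - ((1/5) ^ N * gen L0 c N \<psi> \<eta>))
               \<ge> - (3/2 * \<bar>cnorm L0 c\<bar> * ?R + 1) * (3/5) ^ N" by linarith
  qed
qed

end
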